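(* An oriented Burling graph has no directed cycle.
   Context: Oriented graphs are finite, without loops, multiple arcs or pairs of opposite arcs. In a rooted tree $T$ with root $r$, each non-root vertex $v$ has a parent $p(v)$; children, leaves, ancestors and descendants are as usual. A branch is a sequence $v_1\dots v_k$ ($k\ge0$) with $v_i$ the parent of $v_{i+1}$; it starts at $v_1$. A Burling tree is a 4-tuple $(T,r,\ell,c)$: $T$ a rooted tree with root $r$; $\ell$ assigns to each non-leaf vertex $v$ one of its children $\ell(v)$ (the last-born of $v$); $c$ assigns to every vertex $v$ that is neither the root nor a last-born the vertex-set of a (possibly empty) branch starting at $\ell(p(v))$, and $c(v)=\emptyset$ if $v$ is the root or a last-born. The oriented graph fully derived from it has vertex-set $V(T)$ and an arc $uv$ iff $v\in c(u)$; an oriented graph is derived from the Burling tree if it is an induced subgraph of the fully derived one. An oriented Burling graph is an oriented graph derived from some Burling tree. *)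

theory Defs
  imports Main
begin

(* Oriented graph: finite vertex set V, arc relation A on V, no loops,
   no pairs of opposite arcs (multiple arcs impossible with a relation). *)
definition oriented_graph :: "'a set \<Rightarrow> ('a \<times> 'a) set \<Rightarrow> bool" where
  "oriented_graph V A \<longleftrightarrow> finite V \<and> A \<subseteq> V \<times> V
     \<and> (\<forall>v. (v, v) \<notin> A) \<and> (\<forall>u v. (u, v) \<in> A \<longrightarrow> (v, u) \<notin> A)"

(* Rooted tree on the finite vertex set T with root r, given by a parent
   function p (p r is irrelevant): every non-root vertex has its parent in T,
   and every vertex reaches the root by iterating the parent map. *)
definition rooted_tree :: "'a set \<Rightarrow> 'a \<Rightarrow> ('a \<Rightarrow> 'a) \<Rightarrow> bool" where
  "rooted_tree T r p \<longleftrightarrow> finite T \<and> r \<in> T \<and> (\<forall>v\<in>T - {r}. p v \<in> T)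
     \<and> (\<forall>v\<in>T. \<exists>n. (p ^^ n) v = r)"

definition children :: "'a set \<Rightarrow> 'a \<Rightarrow> ('a \<Rightarrow> 'a) \<Rightarrow> 'a \<Rightarrow> 'a set" where
  "children T r p v = {u \<in> T - {r}. p u = v}"

definition is_branch :: "'a set \<Rightarrow> 'a \<Rightarrow> ('a \<Rightarrow> 'a) \<Rightarrow> 'a list \<Rightarrow> bool" where
  "is_branch T r p xs \<longleftrightarrow> set xs \<subseteq> T
     \<and> (\<forall>i. Suc i < length xs \<longrightarrow> xs ! Suc i \<noteq> r \<and> p (xs ! Suc i) = xs ! i)"

definition burling_tree ::
  "'a set \<Rightarrow> 'a \<Rightarrow> ('a \<Rightarrow> 'a) \<Rightarrow> ('a \<Rightarrow> 'a) \<Rightarrow> ('a \<Rightarrow> 'a set) \<Rightarrow> bool" where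
  "burling_tree T r p l c \<longleftrightarrow> rooted_tree T r p
     \<and> (\<forall>v\<in>T. children T r p v \<noteq> {} \<longrightarrow> l v \<in> children T r p v)
     \<and> c r = {}
     \<and> (\<forall>v\<in>T - {r}. v = l (p v) \<longrightarrow> c v = {})
     \<and> (\<forall>v\<in>T - {r}. v \<noteq> l (p v) \<longrightarrow>
           (\<exists>xs. is_branch T r p xs \<and> (xs \<noteq> [] \<longrightarrow> hd xs = l (p v)) \<and> c v = set xs))"

definition fully_derived_arcs :: "'a set \<Rightarrow> ('a \<Rightarrow> 'a set) \<Rightarrow> ('a \<times> 'a) set" where
  "fully_derived_arcs T c = {(u, v). u \<in> T \<and> v \<in> T \<and> v \<in> c u}"

(* (V, A) is derived from a Burling tree: isomorphic (via f) to an induced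
   subgraph of the fully derived graph.  Tree vertices are taken to be naturals. *)
definition derived_from ::
  "'a set \<Rightarrow> ('a \<times> 'a) set \<Rightarrow> nat set \<Rightarrow> (nat \<Rightarrow> nat set) \<Rightarrow> ('a \<Rightarrow> nat) \<Rightarrow> bool" where
  "derived_from V A T c f \<longleftrightarrow> A \<subseteq> V \<times> V \<and> inj_on f V \<and> f ` V \<subseteq> T
     \<and> (\<forall>u\<in>V. \<forall>v\<in>V. (u, v) \<in> A \<longleftrightarrow> (f u, f v) \<in> fully_derived_arcs T c)"

definition oriented_burling_graph :: "'a set \<Rightarrow> ('a \<times> 'a) set \<Rightarrow> bool" where
  "oriented_burling_graph V A \<longleftrightarrow> oriented_graph V A \<and>
     (\<exists>(T::nat set) r p l c f. burling_tree T r p l c \<and> derived_from V A T c f)"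

definition directed_cycle :: "'a set \<Rightarrow> ('a \<times> 'a) set \<Rightarrow> 'a list \<Rightarrow> bool" where
  "directed_cycle V A xs \<longleftrightarrow> xs \<noteq> [] \<and> distinct xs \<and> set xs \<subseteq> V
     \<and> (\<forall>i < length xs. (xs ! i, xs ! (Suc i mod length xs)) \<in> A)"

end

theory Submission
  imports Defs
begin

definition dep :: "'b \<Rightarrow> ('b \<Rightarrow> 'b) \<Rightarrow> 'b \<Rightarrow> nat" where
  "dep r p v = (LEAST n. (p ^^ n) v = r)"

lemma dep_suc:
  assumes rt: "rooted_tree T r p" and x: "x \<in> T" "x \<noteq> r"
  shows "dep r p x = Suc (dep r p (p x))"
proof -
  from rt x obtain n where n: "(p ^^ n) x = r" unfolding rooted_tree_def by blast
  hence e: "(p ^^ dep r p x) x = r" unfolding dep_def by (rule LeastI)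
  have "dep r p x \<noteq> 0"
  proof
    assume "dep r p x = 0"
    with e have "x = r" by simp
    with x show False by simp
  qed
  then obtain k where k: "dep r p x = Suc k" by (cases "dep r p x") auto
  have ek: "(p ^^ k) (p x) = r" using e k by (simp add: funpow_Suc_right del: funpow.simps)
  hence le1: "dep r p (p x) \<le> k" unfolding dep_def by (rule Least_le)
  have e2: "(p ^^ dep r p (p x)) (p x) = r" using ek unfolding dep_def by (rule LeastI)
  have "(p ^^ Suc (dep r p (p x))) x = r" using e2 by (simp add: funpow_Suc_right del: funpow.simps)
  hence "dep r p x \<le> Suc (dep r p (p x))" unfolding dep_def by (rule Least_le)
  thus ?thesis using le1 k by simp
qed

lemma branch_dep:
  assumes rt: "rooted_tree T r p" and b: "is_branch T r p xs"
  shows "i < length xs \<Longrightarrow> dep r p (xs ! i) = dep r p (xs ! 0) + i"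
proof (induction i)
  case 0 then show ?case by simp
next
  case (Suc i)
  have h: "xs ! Suc i \<noteq> r" "p (xs ! Suc i) = xs ! i" using b Suc.prems unfolding is_branch_def by auto
  have "xs ! Suc i \<in> T" using b Suc.prems nth_mem unfolding is_branch_def by blast
  then have "dep r p (xs ! Suc i) = Suc (dep r p (xs ! i))" using dep_suc[OF rt] h by metis
  then show ?case using Suc by simp
qed

lemma arc_props:
  assumes bt: "burling_tree T r p l c" and u: "u \<in> T" and v: "v \<in> c u"
  shows "u \<noteq> r \<and> u \<noteq> l (p u) \<and> v \<in> T \<and> dep r p u \<le> dep r p v
     \<and> (dep r p v = dep r p u \<longrightarrow> v = l (p u)) \<and> p (l (p u)) = p u"
proof -
  have rt: "rooted_tree T r p" and B2: "\<forall>v\<in>T. children T r p v \<noteq> {} \<longrightarrow> l v \<in> children T r p v"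
    and B3: "c r = {}" and B4: "\<forall>v\<in>T - {r}. v = l (p v) \<longrightarrow> c v = {}"
    and B5: "\<forall>v\<in>T - {r}. v \<noteq> l (p v) \<longrightarrow>
           (\<exists>xs. is_branch T r p xs \<and> (xs \<noteq> [] \<longrightarrow> hd xs = l (p v)) \<and> c v = set xs)"
    using bt by (simp_all add: burling_tree_def)
  have ur: "u \<noteq> r" using B3 v by auto
  have ul: "u \<noteq> l (p u)" using B4 v u ur by blast
  obtain xs where xs: "is_branch T r p xs" "xs \<noteq> [] \<longrightarrow> hd xs = l (p u)" "c u = set xs"
    using B5 u ur ul by blast
  have ne: "xs \<noteq> []" using xs v by auto
  have hd: "xs ! 0 = l (p u)" using xs ne by (simp add: hd_conv_nth)
  have pu: "p u \<in> T" using rt u ur unfolding rooted_tree_def by blast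
  have "u \<in> children T r p (p u)" using u ur unfolding children_def by auto
  hence lc: "l (p u) \<in> children T r p (p u)" using B2 pu by blast
  hence lT: "l (p u) \<in> T" "l (p u) \<noteq> r" "p (l (p u)) = p u" unfolding children_def by auto
  have dl: "dep r p (l (p u)) = dep r p u"
    using dep_suc[OF rt lT(1,2)] dep_suc[OF rt u ur] lT(3) by simp
  obtain i where i: "i < length xs" "v = xs ! i" using xs(3) v by (auto simp: in_set_conv_nth)
  have dv: "dep r p v = dep r p u + i" using branch_dep[OF rt xs(1) i(1)] i(2) hd dl by simp
  have vT: "v \<in> T" using xs(1) i nth_mem unfolding is_branch_def by blast
  have "dep r p v = dep r p u \<longrightarrow> v = l (p u)" using dv i hd by auto
  then show ?thesis using ur ul vT dv lT by simp
qed

lemma two_arcs: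
  assumes bt: "burling_tree T r p l c" and u: "u \<in> T" and v: "v \<in> c u" and w: "w \<in> c v"
  shows "dep r p u < dep r p v"
proof (rule ccontr)
  assume "\<not> ?thesis"
  have a1: "u \<noteq> r \<and> u \<noteq> l (p u) \<and> v \<in> T \<and> dep r p u \<le> dep r p v
     \<and> (dep r p v = dep r p u \<longrightarrow> v = l (p u)) \<and> p (l (p u)) = p u"
    by (rule arc_props[OF bt u v])
  with \<open>\<not> ?thesis\<close> have vl: "v = l (p u)" by auto
  have a2: "v \<noteq> l (p v)" using arc_props[OF bt _ w] a1 by blast
  have "p v = p u" using vl a1 by simp
  with vl a2 show False by simp
qed

theorem lemma3p2:
  fixes V :: "'a set" and A :: "('a \<times> 'a) set"
  assumes "oriented_burling_graph V A"
  shows "\<not> (\<exists>xs. directed_cycle V A xs)"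
proof
  assume "\<exists>xs. directed_cycle V A xs"
  then obtain xs where cyc: "directed_cycle V A xs" by blast
  obtain T :: "nat set" and r p l c f where bt: "burling_tree T r p l c" and df: "derived_from V A T c f"
    using assms unfolding oriented_burling_graph_def by blast
  define k where "k = length xs"
  have kpos: "0 < k" using cyc unfolding k_def directed_cycle_def by auto
  define g where "g i = dep r p (f (xs ! i))" for i
  have arc: "f (xs ! (Suc i mod k)) \<in> c (f (xs ! i)) \<and> f (xs ! i) \<in> T" if "i < k" for i
  proof -
    have "(xs ! i, xs ! (Suc i mod k)) \<in> A" using cyc that unfolding directed_cycle_def k_def by auto
    moreover have "xs ! i \<in> V" "xs ! (Suc i mod k) \<in> V"
      using cyc that kpos unfolding directed_cycle_def k_def by auto
    ultimately show ?thesis using df unfolding derived_from_def fully_derived_arcs_def by auto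
  qed
  have inc: "g i < g (Suc i mod k)" if "i < k" for i
  proof -
    have j: "Suc i mod k < k" using kpos by simp
    show ?thesis using two_arcs[OF bt _ _ arc[OF j, THEN conjunct1]] arc[OF that] unfolding g_def by blast
  qed
  define M where "M = Max (g ` {..<k})"
  have "M \<in> g ` {..<k}" unfolding M_def using kpos by (intro Max_in) auto
  then obtain i0 where i0: "i0 < k" "g i0 = M" by auto
  have "g (Suc i0 mod k) \<le> M" unfolding M_def using kpos by (intro Max_ge) auto
  with inc[OF i0(1)] i0(2) show False by simp
qed

end
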